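(* Let voter types lie in $[\underline s,\overline s]$ with population distribution $F$ having a strictly positive density on $[\underline s,\overline s]$, and let the aggregate shock $r\in\mathbb R$ have distribution $G$ with a strictly positive density on $\mathbb R$. Assume there is no idiosyncratic uncertainty: the share of type-$s$ voters voting for the designer at shock $r$ is $v(s,r)=\mathbf 1\{s\geq r\}$ for all $(s,r)$. Let $s^m=F^{-1}(1/2)$ be the population median type. Then a districting plan $\mathcal H$ is optimal if and only if for $\mathcal H$-almost every district $P\in\operatorname{supp}(\mathcal H)$ there exists a voter type $s^P\geq s^m$ such that $\Pr_P(s=s^P)=\Pr_P(s<s^m)=1/2$. Moreover, under such a plan the designer wins district $P$ if and only if $r\leq s^P$.
   Context: A district is a Borel probability distribution $P$ on $[\underline s,\overline s]$ (the distribution of voter types in it). A districting plan is a Borel probability measure $\mathcal H$ on the space $\Delta[\underline s,\overline s]$ of such distributions (weak* topology) satisfying $\int P(S)\,d\mathcal H(P)=F(S)$ for every Borel $S\subseteq[\underline s,\overline s]$ (districts are equipopulous and together contain the whole population). At aggregate shock $r$, the designer wins district $P$ iff $\int v(s,r)\,dP(s)\geq 1/2$. The designer's expected seat share under $\mathcal H$ is $\int \Pr_{r\sim G}(\text{designer wins }P)\,d\mathcal H(P)$, and a plan is optimal if it maximizes this quantity over all districting plans. *)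

theory Defs
  imports "HOL-Probability.Probability"
begin

definition type_space :: "real \<Rightarrow> real \<Rightarrow> real measure" where
  "type_space sl su = restrict_space borel {sl..su}"

definition wins :: "(real \<Rightarrow> real \<Rightarrow> real) \<Rightarrow> real measure \<Rightarrow> real \<Rightarrow> bool" where
  "wins v P r \<longleftrightarrow> (\<integral>s. v s r \<partial>P) \<ge> 1/2"

definition districting_plan ::
  "real \<Rightarrow> real \<Rightarrow> real measure \<Rightarrow> real measure measure \<Rightarrow> bool" where
  "districting_plan sl su F H \<longleftrightarrow>
     sets H = sets (prob_algebra (type_space sl su)) \<and> prob_space H \<and>
     (\<forall>S \<in> sets (type_space sl su). (\<integral>P. measure P S \<partial>H) = measure F S)"

definition seat_share ::
  "real measure \<Rightarrow> (real \<Rightarrow> real \<Rightarrow> real) \<Rightarrow> real measure measure \<Rightarrow> ennreal" where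
  "seat_share G v H = (\<integral>\<^sup>+P. emeasure G {r. wins v P r} \<partial>H)"

definition optimal_plan ::
  "real \<Rightarrow> real \<Rightarrow> real measure \<Rightarrow> real measure \<Rightarrow> (real \<Rightarrow> real \<Rightarrow> real)
     \<Rightarrow> real measure measure \<Rightarrow> bool" where
  "optimal_plan sl su F G v H \<longleftrightarrow>
     districting_plan sl su F H \<and>
     (\<forall>H'. districting_plan sl su F H' \<longrightarrow> seat_share G v H' \<le> seat_share G v H)"

end

theory Submission
  imports Defs
begin


locale p3 =
  fixes sl su sm :: real
    and f g :: "real \<Rightarrow> real"
    and F G :: "real measure"
    and v :: "real \<Rightarrow> real \<Rightarrow> real"
  assumes F_eq: "F = density (restrict_space lborel {sl..su}) (\<lambda>s. ennreal (f s))"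
    and f_meas: "f \<in> borel_measurable borel"
    and F_prob: "prob_space F"
    and G_eq: "G = density lborel (\<lambda>r. ennreal (g r))"
    and g_meas: "g \<in> borel_measurable borel"
    and g_pos: "\<forall>r. g r > 0"
    and G_prob: "prob_space G"
    and v_eq: "\<forall>s r. v s r = (if r \<le> s then 1 else 0)"
    and sm_in: "sm \<in> {sl..su}"
    and median: "measure F {s \<in> {sl..su}. s \<le> sm} = 1/2"
begin

lemmas [measurable] = f_meas g_meas

abbreviation "\<Omega> \<equiv> {sl..su}"
abbreviation "M \<equiv> type_space sl su"

lemma space_M: "space M = \<Omega>"
  by (simp add: type_space_def space_restrict_space)

lemma sets_M_iff: "A \<in> sets M \<longleftrightarrow> A \<subseteq> \<Omega> \<and> A \<in> sets borel"
  unfolding type_space_def by (subst sets_restrict_space_iff) auto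

lemma sets_MI: "A \<in> sets borel \<Longrightarrow> A \<subseteq> \<Omega> \<Longrightarrow> A \<in> sets M"
  using sets_M_iff by auto

lemma sets_F: "sets F = sets M"
  unfolding F_eq type_space_def
  by (simp add: sets_restrict_space)

lemma space_F: "space F = \<Omega>"
  using sets_eq_imp_space_eq[OF sets_F] space_M by simp

lemma sl_su: "sl \<le> su" using sm_in by auto

lemma F_single: "measure F {x} = 0"
proof -
  have "emeasure F {x} = (\<integral>\<^sup>+ s. ennreal (f s) * indicator {x} s \<partial>restrict_space lborel \<Omega>)"
  proof (cases "x \<in> \<Omega>")
    case True
    then show ?thesis unfolding F_eq
      by (subst emeasure_density) (auto simp: sets_restrict_space_iff intro!: measurable_restrict_space1)
  next
    case False
    then have "{x} \<notin> sets F" using sets_F sets_M_iff by auto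
    then have "emeasure F {x} = 0" by (simp add: emeasure_notin_sets)
    moreover have "(\<integral>\<^sup>+ s. ennreal (f s) * indicator {x} s \<partial>restrict_space lborel \<Omega>) = 0"
      using False by (subst nn_integral_0_iff_AE) (auto simp: space_restrict_space intro!: AE_I2 measurable_restrict_space1)
    ultimately show ?thesis by simp
  qed
  also have "\<dots> = 0"
  proof (subst nn_integral_0_iff_AE)
    show "(\<lambda>s. ennreal (f s) * indicator {x} s) \<in> borel_measurable (restrict_space lborel \<Omega>)"
      by (intro measurable_restrict_space1) simp
    have "AE s in lborel. s \<noteq> x" by (rule AE_lborel_singleton)
    then have "AE s in restrict_space lborel \<Omega>. s \<noteq> x"
      by (subst AE_restrict_space_iff) (auto elim: AE_mp)
    then show "AE s in restrict_space lborel \<Omega>. ennreal (f s) * indicator {x} s = 0"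
      by (rule AE_mp) (auto intro!: AE_I2)
  qed
  finally show ?thesis by (simp add: measure_def)
qed

lemma F_low: "measure F {s \<in> \<Omega>. s < sm} = 1/2"
proof -
  interpret prob_space F by (rule F_prob)
  have "{s \<in> \<Omega>. s \<le> sm} = {s \<in> \<Omega>. s < sm} \<union> {sm}" using sm_in by auto
  moreover have "{s \<in> \<Omega>. s < sm} \<in> sets F" "{sm} \<in> sets F"
    using sm_in by (auto simp: sets_F intro!: sets_MI)
  moreover have "measure F ({s \<in> \<Omega>. s < sm} \<union> {sm}) = measure F {s \<in> \<Omega>. s < sm} + measure F {sm}"
    by (rule finite_measure_Union) (use calculation in auto)
  ultimately have "measure F {s \<in> \<Omega>. s \<le> sm} = measure F {s \<in> \<Omega>. s < sm} + measure F {sm}"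
    by simp
  then show ?thesis using median F_single by simp
qed

lemma F_high: "measure F {s \<in> \<Omega>. sm \<le> s} = 1/2"
proof -
  interpret prob_space F by (rule F_prob)
  have "{s \<in> \<Omega>. sm \<le> s} = space F - {s \<in> \<Omega>. s < sm}" using space_F by auto
  moreover have "{s \<in> \<Omega>. s < sm} \<in> sets F"
    by (auto simp: sets_F intro!: sets_MI)
  ultimately show ?thesis using F_low prob_compl by simp
qed

definition Gc :: "real \<Rightarrow> real" where "Gc t = measure G {..t}"

lemma Gc_strict: assumes "t < s" shows "Gc t < Gc s"
proof -
  interpret prob_space G by (rule G_prob)
  have sG: "sets G = sets borel" by (simp add: G_eq)
  have "{..s} = {..t} \<union> {t<..s}" using assms by auto
  then have eq: "Gc s = Gc t + measure G {t<..s}" unfolding Gc_def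
    by (subst finite_measure_Union[symmetric]) (auto simp: sG)
  have "emeasure G {t<..s} \<noteq> 0"
  proof
    assume "emeasure G {t<..s} = 0"
    then have "(\<integral>\<^sup>+ x. ennreal (g x) * indicator {t<..s} x \<partial>lborel) = 0"
      unfolding G_eq by (subst (asm) emeasure_density) auto
    then have "AE x in lborel. ennreal (g x) * indicator {t<..s} x = 0"
      using g_meas by (subst (asm) nn_integral_0_iff_AE) auto
    then have "AE x in lborel. x \<notin> {t<..s}"
      by (rule AE_mp) (auto intro!: AE_I2 simp: indicator_def less_imp_le[OF spec[OF g_pos]] g_pos[rule_format, THEN less_imp_neq, symmetric])
    moreover have "{x \<in> space lborel. \<not> x \<notin> {t<..s}} = {t<..s}" by auto
    ultimately have "emeasure lborel {t<..s} = 0"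
      using AE_iff_measurable[of "{t<..s}" lborel "\<lambda>x. x \<notin> {t<..s}"] by simp
    then show False using assms by simp
  qed
  then have "measure G {t<..s} > 0"
    using emeasure_eq_measure by (simp add: zero_less_measure_iff)
  then show ?thesis using eq by simp
qed

lemma Gc_mono: "t \<le> s \<Longrightarrow> Gc t \<le> Gc s"
  using Gc_strict by (cases "t = s") (auto simp: less_le)

lemma emeasure_G_atMost: "emeasure G {..t} = ennreal (Gc t)"
proof -
  interpret prob_space G by (rule G_prob)
  show ?thesis unfolding Gc_def by (simp add: emeasure_eq_measure)
qed


lemma PA: assumes "P \<in> space (prob_algebra M)"
  shows "sets P = sets M" "prob_space P" "space P = \<Omega>"
  using assms space_M by (auto simp: space_prob_algebra dest: sets_eq_imp_space_eq)

definition pu :: "real measure \<Rightarrow> real \<Rightarrow> real" where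
  "pu P r = measure P {s \<in> \<Omega>. r \<le> s}"

lemma up_sets[simp]: "{s. sl \<le> s \<and> s \<le> su \<and> r \<le> s} \<in> sets M" "{s. sl \<le> s \<and> s \<le> su \<and> s < r} \<in> sets M"
  "{s. sl \<le> s \<and> s \<le> su \<and> r < s} \<in> sets M" "{s. sl \<le> s \<and> s \<le> su \<and> r < s \<and> s \<noteq> t} \<in> sets M"
  by (auto intro!: sets_MI)

lemma up_sets'[simp]: "{s \<in> \<Omega>. r \<le> s} \<in> sets M" "{s \<in> \<Omega>. s < r} \<in> sets M"
  "{s \<in> \<Omega>. r < s} \<in> sets M" "{s \<in> \<Omega>. r < s \<and> s \<noteq> t} \<in> sets M"
  by (auto intro!: sets_MI)

lemma single_sets: "x \<in> \<Omega> \<Longrightarrow> {x} \<in> sets M"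
  by (auto intro!: sets_MI)

lemma wins_iff: assumes P: "P \<in> space (prob_algebra M)"
  shows "wins v P r \<longleftrightarrow> 1/2 \<le> pu P r"
proof -
  interpret prob_space P using PA[OF P] by simp
  have "(\<integral>s. v s r \<partial>P) = (\<integral>s. indicator {s \<in> \<Omega>. r \<le> s} s \<partial>P)"
    using PA[OF P] by (intro Bochner_Integration.integral_cong) (auto simp: v_eq indicator_def)
  also have "\<dots> = pu P r" using PA[OF P] unfolding pu_def
    by (simp only: Bochner_Integration.integral_indicator) (rule arg_cong[where f="measure P"], auto)
  finally show ?thesis by (simp add: wins_def)
qed

lemma pu_mono: assumes P: "P \<in> space (prob_algebra M)" and "r \<le> r'"
  shows "pu P r' \<le> pu P r"
proof -
  interpret prob_space P using PA[OF P] by simp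
  show ?thesis unfolding pu_def using PA[OF P] assms(2)
    by (intro finite_measure_mono) auto
qed

lemma pu_sl: assumes P: "P \<in> space (prob_algebra M)" shows "pu P sl = 1"
proof -
  interpret prob_space P using PA[OF P] by simp
  have "{s \<in> \<Omega>. sl \<le> s} = space P" using PA[OF P] by auto
  then show ?thesis using prob_space.prob_space[of P] PA[OF P] by (simp add: pu_def)
qed

lemma pu_big: assumes "su < r" shows "pu P r = 0"
proof -
  have "{s \<in> \<Omega>. r \<le> s} = {}" using assms by auto
  then have "measure P {s \<in> \<Omega>. r \<le> s} = 0" by (simp only:) simp
  then show ?thesis by (simp add: pu_def)
qed

definition qP :: "real measure \<Rightarrow> real" where
  "qP P = Sup {r. 1/2 \<le> pu P r}"

lemma qP: assumes P: "P \<in> space (prob_algebra M)"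
  shows "{r. 1/2 \<le> pu P r} = {..qP P}" "sl \<le> qP P" "qP P \<le> su"
proof -
  interpret prob_space P using PA[OF P] by simp
  let ?R = "{r. 1/2 \<le> pu P r}"
  have ne: "sl \<in> ?R" using pu_sl[OF P] by simp
  have bd: "r \<le> su" if "r \<in> ?R" for r
    using that pu_big[of r P] by (cases "su < r") auto
  have bdd: "bdd_above ?R" using bd by (auto simp: bdd_above_def)
  have up: "r \<le> qP P" if "r \<in> ?R" for r
    unfolding qP_def using that bdd by (rule cSup_upper)
  have down: "r \<in> ?R" if "r < qP P" for r
  proof -
    obtain r' where "r' \<in> ?R" "r < r'"
      using \<open>r < qP P\<close> ne bdd unfolding qP_def by (subst (asm) less_cSup_iff) auto
    then show ?thesis using pu_mono[OF P, of r r'] by auto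
  qed
  have qin: "qP P \<in> ?R"
  proof -
    define q where "q = qP P"
    define A where "A n = {s \<in> \<Omega>. q - 1 / real (Suc n) \<le> s}" for n
    have dec: "decseq A" unfolding A_def decseq_def
    proof (intro allI impI subsetI)
      fix m n :: nat and x assume "m \<le> n" "x \<in> {s \<in> \<Omega>. q - 1 / real (Suc n) \<le> s}"
      moreover have "1 / real (Suc n) \<le> 1 / real (Suc m)" using \<open>m \<le> n\<close>
        by (intro divide_left_mono) auto
      ultimately show "x \<in> {s \<in> \<Omega>. q - 1 / real (Suc m) \<le> s}" by auto
    qed
    have inter: "(\<Inter>n. A n) = {s \<in> \<Omega>. q \<le> s}"
    proof (intro equalityI subsetI)
      fix x assume x: "x \<in> (\<Inter>n. A n)"
      have "q \<le> x"
      proof (rule ccontr)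
        assume "\<not> q \<le> x"
        then obtain n where "1 / real (Suc n) < q - x"
          using reals_Archimedean[of "q - x"] by (auto simp: inverse_eq_divide)
        moreover have "x \<in> A n" using x by blast
        ultimately show False by (simp add: A_def)
      qed
      then show "x \<in> {s \<in> \<Omega>. q \<le> s}" using x by (auto simp: A_def)
    next
      fix x assume x: "x \<in> {s \<in> \<Omega>. q \<le> s}"
      show "x \<in> (\<Inter>n. A n)"
      proof
        fix n
        have "0 \<le> 1 / real (Suc n)" by simp
        moreover have "q \<le> x" using x by simp
        ultimately have "q - 1 / real (Suc n) \<le> x" by linarith
        then show "x \<in> A n" using x unfolding A_def by simp
      qed
    qed
    have "range A \<subseteq> sets P" using PA[OF P] by (auto simp: A_def)
    then have lim: "(\<lambda>n. measure P (A n)) \<longlonglongrightarrow> measure P {s \<in> \<Omega>. q \<le> s}"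
      using Lim_measure_decseq[of A P] dec inter by (simp add: emeasure_eq_measure)
    have "\<forall>n. 1/2 \<le> measure P (A n)"
    proof
      fix n
      have "q - 1 / real (Suc n) < q" by simp
      then have "q - 1 / real (Suc n) \<in> ?R" using down q_def by blast
      then show "1/2 \<le> measure P (A n)" by (simp add: A_def pu_def)
    qed
    then have "1/2 \<le> measure P {s \<in> \<Omega>. q \<le> s}"
      by (intro LIMSEQ_le_const[OF lim]) auto
    then show ?thesis by (simp add: q_def pu_def)
  qed
  show "?R = {..qP P}"
  proof (intro equalityI subsetI)
    fix r assume "r \<in> ?R" then show "r \<in> {..qP P}" using up by auto
  next
    fix r assume "r \<in> {..qP P}"
    then show "r \<in> ?R" using qin pu_mono[OF P, of r "qP P"] by auto
  qed
  show "sl \<le> qP P" using up ne by blast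
  show "qP P \<le> su" using bd qin by blast
qed

lemma qP_pu: "P \<in> space (prob_algebra M) \<Longrightarrow> 1/2 \<le> pu P (qP P)"
  using qP(1) by blast

lemma wins_qP: "P \<in> space (prob_algebra M) \<Longrightarrow> {r. wins v P r} = {..qP P}"
  using qP(1)[of P] wins_iff[of P] by auto

lemma qP_meas: "qP \<in> borel_measurable (prob_algebra M)"
proof (rule borel_measurableI_ge)
  fix y
  have eq: "{P \<in> space (prob_algebra M). y \<le> qP P} = {P \<in> space (prob_algebra M). 1/2 \<le> pu P y}"
    using qP(1) by blast
  have [measurable]: "(\<lambda>P. measure P {s \<in> \<Omega>. y \<le> s}) \<in> borel_measurable (prob_algebra M)"
    by (rule measurable_measure_prob_algebra) simp
  have "{P \<in> space (prob_algebra M). 1/2 \<le> pu P y} \<in> sets (prob_algebra M)"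
    unfolding pu_def by measurable
  then show "{P \<in> space (prob_algebra M). y \<le> qP P} \<in> sets (prob_algebra M)" using eq by simp
qed

lemma Gc_meas[measurable]: "Gc \<in> borel_measurable borel"
  by (rule borel_measurable_mono) (auto simp: mono_def Gc_mono)

lemma W_eq: "P \<in> space (prob_algebra M) \<Longrightarrow> emeasure G {r. wins v P r} = ennreal (Gc (qP P))"
  using wins_qP emeasure_G_atMost by simp

lemma W_meas: "(\<lambda>P. ennreal (Gc (qP P))) \<in> borel_measurable (prob_algebra M)"
  using qP_meas by measurable


lemma Gc_nonneg: "0 \<le> Gc t" by (simp add: Gc_def)

lemma Gc_le1: "Gc t \<le> 1"
proof -
  interpret prob_space G by (rule G_prob)
  show ?thesis by (simp add: Gc_def)
qed

definition gm :: real where "gm = Gc sm"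

definition psi :: "real \<Rightarrow> real" where
  "psi s = (if s < sm then gm else 2 * Gc s - gm)"

lemma psi_ge: "gm \<le> psi s"
  using Gc_mono[of sm s] by (auto simp: psi_def gm_def)

lemma psi_nonneg: "0 \<le> psi s"
  using psi_ge[of s] Gc_nonneg[of sm] by (simp add: gm_def)

lemma psi_le2: "psi s \<le> 2"
  using Gc_le1[of s] Gc_le1[of sm] Gc_nonneg[of s] Gc_nonneg[of sm] by (auto simp: psi_def gm_def)

lemma psi_meas[measurable]: "psi \<in> borel_measurable borel"
  unfolding psi_def by measurable

lemma psi_meas_M[measurable]: "psi \<in> borel_measurable M"
  unfolding type_space_def by (intro measurable_restrict_space1) simp

lemma psi_int: assumes P: "P \<in> space (prob_algebra M)" shows "integrable P psi"
proof -
  interpret prob_space P using PA[OF P] by simp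
  show ?thesis
  proof (rule integrable_const_bound[where B=2])
    show "AE x in P. norm (psi x) \<le> 2" using psi_le2 psi_nonneg by (auto intro!: AE_I2)
    show "psi \<in> borel_measurable P" using PA[OF P] by (simp cong: measurable_cong_sets)
  qed
qed

lemma decomp: assumes P: "P \<in> space (prob_algebra M)" and q: "sm \<le> qP P"
  defines "phi \<equiv> (\<lambda>s. if qP P \<le> s then 2 * Gc (qP P) - gm else gm)"
  shows "\<And>s. phi s \<le> psi s"
    and "(\<integral>s. psi s \<partial>P) - Gc (qP P) = (\<integral>s. psi s - phi s \<partial>P) + (2 * pu P (qP P) - 1) * (Gc (qP P) - gm)"
    and "integrable P (\<lambda>s. psi s - phi s)"
proof -
  interpret prob_space P using PA[OF P] by simp
  define q where "q = qP P"
  show le: "phi s \<le> psi s" for s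
    using Gc_mono[of q s] Gc_mono[of sm s] q
    by (auto simp: phi_def psi_def gm_def q_def)
  have phi_eq: "phi s = gm + (2 * Gc q - 2 * gm) * indicator {s \<in> \<Omega>. q \<le> s} s" if "s \<in> space P" for s
    using that PA[OF P] by (auto simp: phi_def q_def indicator_def)
  have "{s. sl \<le> s \<and> s \<le> su \<and> q \<le> s} \<inter> \<Omega> = {s. sl \<le> s \<and> s \<le> su \<and> q \<le> s}" by auto
  have iphi: "integrable P phi"
    by (rule Bochner_Integration.integrable_cong[THEN iffD2, OF refl phi_eq])
      (use PA[OF P] in \<open>auto intro!: Bochner_Integration.integrable_add integrable_mult_right integrable_real_indicator simp: less_top[symmetric]\<close>)
  have "(\<integral>s. phi s \<partial>P) = (\<integral>s. gm + (2 * Gc q - 2 * gm) * indicator {s \<in> \<Omega>. q \<le> s} s \<partial>P)"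
    by (rule Bochner_Integration.integral_cong[OF refl phi_eq])
  also have "\<dots> = gm + (2 * Gc q - 2 * gm) * pu P q"
    using PA[OF P] prob_space
      \<open>{s. sl \<le> s \<and> s \<le> su \<and> q \<le> s} \<inter> \<Omega> = {s. sl \<le> s \<and> s \<le> su \<and> q \<le> s}\<close>
    by (subst Bochner_Integration.integral_add)
       (auto simp: pu_def prob_space less_top[symmetric] Int_absorb2 intro!: integrable_mult_right integrable_real_indicator
        arg_cong[where f="measure P"])
  finally have I: "(\<integral>s. phi s \<partial>P) = gm + (2 * Gc q - 2 * gm) * pu P q" .
  show int: "integrable P (\<lambda>s. psi s - phi s)"
    using psi_int[OF P] iphi by simp
  have "(\<integral>s. psi s - phi s \<partial>P) = (\<integral>s. psi s \<partial>P) - (\<integral>s. phi s \<partial>P)"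
    using psi_int[OF P] iphi by simp
  then show "(\<integral>s. psi s \<partial>P) - Gc (qP P) = (\<integral>s. psi s - phi s \<partial>P) + (2 * pu P (qP P) - 1) * (Gc (qP P) - gm)"
    using I by (simp add: q_def algebra_simps)
qed

lemma bound: assumes P: "P \<in> space (prob_algebra M)"
  shows "Gc (qP P) \<le> (\<integral>s. psi s \<partial>P)"
proof -
  interpret prob_space P using PA[OF P] by simp
  have ge: "gm \<le> (\<integral>s. psi s \<partial>P)"
  proof -
    have "(\<integral>s. gm \<partial>P) \<le> (\<integral>s. psi s \<partial>P)"
      using psi_int[OF P] psi_ge by (intro integral_mono) auto
    then show ?thesis by (simp add: prob_space)
  qed
  show ?thesis
  proof (cases "qP P < sm")
    case True
    then show ?thesis using Gc_strict[OF True] ge by (simp add: gm_def)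
  next
    case False
    then have q: "sm \<le> qP P" by simp
    define phi where "phi = (\<lambda>s. if qP P \<le> s then 2 * Gc (qP P) - gm else gm)"
    have "0 \<le> (\<integral>s. psi s - phi s \<partial>P)"
      using decomp(1)[OF P q] by (intro Bochner_Integration.integral_nonneg) (auto simp: phi_def)
    moreover have "0 \<le> (2 * pu P (qP P) - 1) * (Gc (qP P) - gm)"
      using qP_pu[OF P] Gc_mono[OF q] by (intro mult_nonneg_nonneg) (auto simp: gm_def)
    ultimately show ?thesis using decomp(2)[OF P q] unfolding phi_def by linarith
  qed
qed


lemma Gc_gm_strict: "sm < t \<Longrightarrow> gm < Gc t"
  using Gc_strict by (simp add: gm_def)

lemma equality_struct:
  assumes P: "P \<in> space (prob_algebra M)" and sm0: "measure P {sm} = 0"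
    and eq: "Gc (qP P) = (\<integral>s. psi s \<partial>P)"
  shows "sm \<le> qP P \<and> measure P {qP P} = 1/2 \<and> measure P {s \<in> \<Omega>. s < sm} = 1/2"
proof -
  interpret prob_space P using PA[OF P] by simp
  have evP: "sets P = sets M" "space P = \<Omega>" using PA[OF P] by auto
  define q where "q = qP P"
  have qO: "sl \<le> q" "q \<le> su" using qP(2,3)[OF P] by (auto simp: q_def)
  have ge: "gm \<le> (\<integral>s. psi s \<partial>P)"
  proof -
    have "(\<integral>s. gm \<partial>P) \<le> (\<integral>s. psi s \<partial>P)"
      using psi_int[OF P] psi_ge by (intro integral_mono) auto
    then show ?thesis by (simp add: prob_space)
  qed
  have q: "sm \<le> q"
  proof (rule ccontr)
    assume "\<not> sm \<le> q"
    then have "Gc q < gm" using Gc_strict[of q sm] by (simp add: gm_def)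
    then show False using ge eq by (simp add: q_def)
  qed
  define phi where "phi = (\<lambda>s. if qP P \<le> s then 2 * Gc (qP P) - gm else gm)"
  have A: "0 \<le> (\<integral>s. psi s - phi s \<partial>P)"
    using decomp(1)[OF P q[unfolded q_def]] by (intro Bochner_Integration.integral_nonneg) (auto simp: phi_def)
  have B: "0 \<le> (2 * pu P q - 1) * (Gc q - gm)"
    using qP_pu[OF P] Gc_mono[OF q] by (intro mult_nonneg_nonneg) (auto simp: gm_def q_def)
  have D: "(\<integral>s. psi s \<partial>P) - Gc q = (\<integral>s. psi s - phi s \<partial>P) + (2 * pu P q - 1) * (Gc q - gm)"
    using decomp(2)[OF P q[unfolded q_def]] by (simp add: phi_def q_def)
  have S0: "(\<integral>s. psi s - phi s \<partial>P) + (2 * pu P q - 1) * (Gc q - gm) = 0"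
    using D eq by (simp add: q_def)
  have A0: "(\<integral>s. psi s - phi s \<partial>P) = 0" using A B S0 by linarith
  have B0: "(2 * pu P q - 1) * (Gc q - gm) = 0" using A B S0 by linarith
  have "AE s in P. psi s - phi s = 0"
    using A0 decomp(1,3)[OF P q[unfolded q_def]]
    by (subst (asm) integral_nonneg_eq_0_iff_AE) (auto simp: phi_def)
  then have "AE s in P. s \<notin> {s \<in> \<Omega>. sm < s \<and> s \<noteq> q}"
  proof (rule AE_mp, intro AE_I2 impI)
    fix s assume "psi s - phi s = 0"
    show "s \<notin> {s \<in> \<Omega>. sm < s \<and> s \<noteq> q}"
    proof
      assume s: "s \<in> {s \<in> \<Omega>. sm < s \<and> s \<noteq> q}"
      show False
      proof (cases "q < s")
        case True
        then have "Gc q < Gc s" by (rule Gc_strict)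
        then show False using \<open>psi s - phi s = 0\<close> True s q
          by (auto simp: psi_def phi_def q_def)
      next
        case False
        then have "gm < Gc s" using s Gc_gm_strict by auto
        then show False using \<open>psi s - phi s = 0\<close> False s
          by (auto simp: psi_def phi_def q_def)
      qed
    qed
  qed
  moreover have "{s \<in> \<Omega>. sm < s \<and> s \<noteq> q} \<in> sets P" using evP by simp
  ultimately have N0: "prob {s \<in> \<Omega>. sm < s \<and> s \<noteq> q} = 0"
    using AE_iff_measurable[of "{s \<in> \<Omega>. sm < s \<and> s \<noteq> q}" P "\<lambda>s. s \<notin> {s \<in> \<Omega>. sm < s \<and> s \<noteq> q}"] evP
    by (auto simp: emeasure_eq_measure)
  have smO: "{sm} \<in> sets P" "{q} \<in> sets P" using evP sm_in qO by (auto intro!: single_sets)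
  have sub: "prob {s \<in> \<Omega>. t \<le> s} \<le> prob {sm} + prob {q}" if "sm \<le> t" for t
  proof -
    have "({sm} \<union> {q}) \<union> {s \<in> \<Omega>. sm < s \<and> s \<noteq> q} \<in> events"
      by (rule sets.Un[OF sets.Un[OF smO]]) (use evP in simp)
    then have "prob {s \<in> \<Omega>. t \<le> s} \<le> prob (({sm} \<union> {q}) \<union> {s \<in> \<Omega>. sm < s \<and> s \<noteq> q})"
      using that by (intro finite_measure_mono) auto
    also have "\<dots> \<le> prob ({sm} \<union> {q}) + prob {s \<in> \<Omega>. sm < s \<and> s \<noteq> q}"
      by (rule measure_Un_le[OF sets.Un[OF smO]]) (use evP in simp)
    also have "\<dots> \<le> prob {sm} + prob {q}"
      using N0 smO measure_Un_le[OF smO] by simp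
    finally show ?thesis .
  qed
  have pq: "1/2 \<le> pu P q" using qP_pu[OF P] by (simp add: q_def)
  have "q \<noteq> sm"
  proof
    assume "q = sm"
    then have "prob {s \<in> \<Omega>. q \<le> s} \<le> 0" using sub[of sm] sm0 by simp
    then show False using pq by (simp add: pu_def)
  qed
  then have "sm < q" using q by simp
  then have "pu P q = 1/2" using B0 Gc_gm_strict[of q] by simp
  have "prob {q} \<le> pu P q"
    unfolding pu_def using qO evP by (intro finite_measure_mono) auto
  moreover have "pu P q \<le> prob {q}" using sub[of q] q sm0 by (simp add: pu_def)
  ultimately have Pq: "prob {q} = 1/2" using \<open>pu P q = 1/2\<close> by simp
  have hi: "prob {s \<in> \<Omega>. sm \<le> s} = 1/2"
  proof -
    have "prob {q} \<le> prob {s \<in> \<Omega>. sm \<le> s}"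
      using qO q evP by (intro finite_measure_mono) auto
    moreover have "prob {s \<in> \<Omega>. sm \<le> s} \<le> prob {q}" using sub[of sm] sm0 by simp
    ultimately show ?thesis using Pq by simp
  qed
  have "{s \<in> \<Omega>. s < sm} = space P - {s \<in> \<Omega>. sm \<le> s}" using evP by auto
  then have "prob {s \<in> \<Omega>. s < sm} = 1/2"
    using prob_compl[of "{s \<in> \<Omega>. sm \<le> s}"] hi evP by simp
  then show ?thesis using q Pq by (simp add: q_def)
qed

lemma struct_equality:
  assumes P: "P \<in> space (prob_algebra M)" and sP: "sm \<le> sP" "measure P {sP} = 1/2"
    and low: "measure P {s \<in> \<Omega>. s < sm} = 1/2"
  shows "(\<forall>r. wins v P r \<longleftrightarrow> r \<le> sP) \<and> Gc sP = (\<integral>s. psi s \<partial>P) \<and> qP P = sP"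
proof -
  interpret prob_space P using PA[OF P] by simp
  have evP: "sets P = sets M" "space P = \<Omega>" using PA[OF P] by auto
  have sPO: "sP \<in> \<Omega>"
  proof (rule ccontr)
    assume "sP \<notin> \<Omega>"
    then have "{sP} \<notin> sets P" using evP sets_M_iff by auto
    then show False using sP(2) by (simp add: measure_notin_sets)
  qed
  let ?L = "{s \<in> \<Omega>. s < sm}"
  have Ls: "?L \<in> sets P" "{sP} \<in> sets P" using evP sPO by (auto intro!: single_sets)
  have "prob (?L \<union> {sP}) = 1"
    using finite_measure_Union[OF Ls] sP low by auto
  moreover have U: "?L \<union> {sP} \<in> events" using Ls by blast
  ultimately have N0: "prob (space P - (?L \<union> {sP})) = 0"
    using prob_compl[OF U] by simp
  have "{s. sl \<le> s \<and> s \<le> su \<and> s < sm} \<inter> \<Omega> = {s. sl \<le> s \<and> s \<le> su \<and> s < sm}" by auto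
  have NS: "space P - (?L \<union> {sP}) \<in> events" using U by blast
  have AEs: "AE s in P. s \<in> ?L \<union> {sP}"
  proof -
    have "space P - (?L \<union> {sP}) \<in> null_sets P" using N0 NS
      by (simp add: null_sets_def emeasure_eq_measure del: Un_insert_right)
    then show ?thesis by (rule AE_I') blast
  qed
  have wins: "wins v P r \<longleftrightarrow> r \<le> sP" for r
  proof (cases "r \<le> sP")
    case True
    have "prob {sP} \<le> pu P r"
      unfolding pu_def using sPO True evP by (intro finite_measure_mono) auto
    then show ?thesis using True wins_iff[OF P] sP by simp
  next
    case False
    have "pu P r \<le> prob (space P - (?L \<union> {sP}))"
      unfolding pu_def using False sP evP NS by (intro finite_measure_mono) auto
    then show ?thesis using False wins_iff[OF P] N0 by simp
  qed
  have "(\<integral>s. psi s \<partial>P) = (\<integral>s. gm * indicator ?L s + (2 * Gc sP - gm) * indicator {sP} s \<partial>P)"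
  proof (rule integral_cong_AE)
    show "psi \<in> borel_measurable P" using evP by (simp cong: measurable_cong_sets)
    show "(\<lambda>s. gm * indicator ?L s + (2 * Gc sP - gm) * indicator {sP} s) \<in> borel_measurable P"
      using Ls by (intro borel_measurable_add borel_measurable_times borel_measurable_indicator) auto
    show "AE s in P. psi s = gm * indicator ?L s + (2 * Gc sP - gm) * indicator {sP} s"
      using AEs by eventually_elim (use sP(1) in \<open>auto simp: psi_def indicator_def\<close>)
  qed
  also have "\<dots> = gm * prob ?L + (2 * Gc sP - gm) * prob {sP}"
    using Ls evP sP low sPO
      \<open>{s. sl \<le> s \<and> s \<le> su \<and> s < sm} \<inter> \<Omega> = {s. sl \<le> s \<and> s \<le> su \<and> s < sm}\<close>
    by (subst Bochner_Integration.integral_add)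
       (auto simp: less_top[symmetric] Int_absorb2 intro!: integrable_mult_right integrable_real_indicator)
  finally have X: "(\<integral>s. psi s \<partial>P) = gm * prob ?L + (2 * Gc sP - gm) * prob {sP}" .
  have "Gc sP = (\<integral>s. psi s \<partial>P)" unfolding X low sP(2) by (simp add: field_simps)
  moreover have "qP P = sP"
    using wins_qP[OF P] wins by (metis atMost_iff dual_order.antisym mem_Collect_eq order_refl)
  ultimately show ?thesis using wins by simp
qed


lemma F_in: "F \<in> space (prob_algebra M)"
  using F_prob sets_F by (simp add: space_prob_algebra)

definition Psi :: "real measure \<Rightarrow> ennreal" where
  "Psi P = (\<integral>\<^sup>+ s. ennreal (psi s) \<partial>P)"

lemma Psi_eq: assumes P: "P \<in> space (prob_algebra M)" shows "Psi P = ennreal (\<integral>s. psi s \<partial>P)"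
  unfolding Psi_def using psi_int[OF P] psi_nonneg by (intro nn_integral_eq_integral) auto

lemma Psi_meas: "Psi \<in> borel_measurable (prob_algebra M)"
  unfolding Psi_def prob_algebra_def
  by (intro measurable_restrict_space1 nn_integral_measurable_subprob_algebra) simp

lemma plan_facts: assumes H: "districting_plan sl su F H"
  shows "sets H = sets (prob_algebra M)" "prob_space H" "space H = space (prob_algebra M)"
    "\<And>S. S \<in> sets M \<Longrightarrow> (\<integral>P. measure P S \<partial>H) = measure F S"
  using H unfolding districting_plan_def by (auto dest: sets_eq_imp_space_eq)

lemma plan_measure_int: assumes H: "districting_plan sl su F H" and S: "S \<in> sets M"
  shows "integrable H (\<lambda>P. measure P S)"
proof -
  interpret prob_space H using plan_facts(2)[OF H] .
  show ?thesis
  proof (rule integrable_const_bound[where B=1])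
    show "AE x in H. norm (measure x S) \<le> 1"
      using plan_facts(3)[OF H] by (auto intro!: AE_I2 prob_space.prob_le_1 simp: space_prob_algebra)
    show "(\<lambda>P. measure P S) \<in> borel_measurable H"
      using plan_facts(1)[OF H] S by (simp cong: measurable_cong_sets)
  qed
qed

lemma plan_join: assumes H: "districting_plan sl su F H"
  shows "(\<integral>\<^sup>+P. Psi P \<partial>H) = Psi F"
proof -
  note HF = plan_facts[OF H]
  interpret prob_space H using HF(2) .
  have idm: "(\<lambda>P. P) \<in> H \<rightarrow>\<^sub>M subprob_algebra M"
    by (rule measurable_prob_algebraD[OF measurable_ident_sets[OF HF(1)]])
  define H' where "H' = distr H (subprob_algebra M) (\<lambda>P. P)"
  have sH': "sets H' = sets (subprob_algebra M)" by (simp add: H'_def)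
  have "join H' = F"
  proof (rule measure_eqI)
    show "sets (join H') = sets F" using sH' sets_F by simp
    fix A assume "A \<in> sets (join H')"
    then have A: "A \<in> sets M" using sH' by simp
    have "emeasure (join H') A = (\<integral>\<^sup>+ P. emeasure P A \<partial>H')"
      by (rule emeasure_join[OF sH' A])
    also have "\<dots> = (\<integral>\<^sup>+ P. emeasure P A \<partial>H)"
      unfolding H'_def using A by (subst nn_integral_distr[OF idm]) auto
    also have "\<dots> = (\<integral>\<^sup>+ P. ennreal (measure P A) \<partial>H)"
      using HF(3) by (intro nn_integral_cong) (auto simp: space_prob_algebra finite_measure.emeasure_eq_measure[OF prob_space.finite_measure])
    also have "\<dots> = ennreal (\<integral>P. measure P A \<partial>H)"
      using plan_measure_int[OF H A] by (intro nn_integral_eq_integral) auto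
    also have "\<dots> = emeasure F A"
      using HF(4)[OF A] F_prob by (simp add: finite_measure.emeasure_eq_measure[OF prob_space.finite_measure])
    finally show "emeasure (join H') A = emeasure F A" .
  qed
  then have "Psi F = (\<integral>\<^sup>+ s. ennreal (psi s) \<partial>join H')" by (simp add: Psi_def)
  also have "\<dots> = (\<integral>\<^sup>+ P. Psi P \<partial>H')"
    unfolding Psi_def by (rule nn_integral_join[OF _ sH']) simp
  also have "\<dots> = (\<integral>\<^sup>+ P. Psi P \<partial>H)"
    unfolding H'_def Psi_def by (subst nn_integral_distr[OF idm]) auto
  finally show ?thesis by simp
qed

lemma seat_eq: assumes H: "districting_plan sl su F H"
  shows "seat_share G v H = (\<integral>\<^sup>+P. ennreal (Gc (qP P)) \<partial>H)"
  unfolding seat_share_def using plan_facts(3)[OF H] W_eq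
  by (intro nn_integral_cong) auto

lemma seat_le: assumes H: "districting_plan sl su F H"
  shows "seat_share G v H \<le> Psi F"
proof -
  have "seat_share G v H \<le> (\<integral>\<^sup>+P. Psi P \<partial>H)"
    unfolding seat_eq[OF H] using plan_facts(3)[OF H] bound Psi_eq
    by (intro nn_integral_mono) (auto intro: ennreal_leI)
  then show ?thesis using plan_join[OF H] by simp
qed


definition Kd :: "real \<times> real \<Rightarrow> real measure" where
  "Kd z = distr (measure_pmf (bernoulli_pmf (1/2))) M (\<lambda>b. if b then fst z else snd z)"

lemma Kd_h: "z \<in> \<Omega> \<times> \<Omega> \<Longrightarrow> (\<lambda>b. if b then fst z else snd z) \<in> measure_pmf (bernoulli_pmf (1/2)) \<rightarrow>\<^sub>M M"
  using space_M by auto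

lemma Kd_sets: "sets (Kd z) = sets M" by (simp add: Kd_def)

lemma Kd_prob: "z \<in> \<Omega> \<times> \<Omega> \<Longrightarrow> prob_space (Kd z)"
  unfolding Kd_def by (rule prob_space.prob_space_distr[OF prob_space_measure_pmf Kd_h])

lemma Kd_em: assumes z: "z \<in> \<Omega> \<times> \<Omega>" and A: "A \<in> sets M"
  shows "emeasure (Kd z) A = ennreal (1/2 * indicator A (fst z) + 1/2 * indicator A (snd z))"
proof -
  have "emeasure (Kd z) A = (\<integral>\<^sup>+ x. indicator A x \<partial>Kd z)"
    using A by (simp add: Kd_sets)
  also have "\<dots> = (\<integral>\<^sup>+ b. indicator A (if b then fst z else snd z) \<partial>measure_pmf (bernoulli_pmf (1/2)))"
    unfolding Kd_def using A by (subst nn_integral_distr[OF Kd_h[OF z]]) auto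
  also have "\<dots> = (\<Sum>b\<in>UNIV. indicator A (if b then fst z else snd z) * ennreal (pmf (bernoulli_pmf (1/2)) b))"
    by (subst nn_integral_measure_pmf_support[of UNIV]) auto
  also have "\<dots> = (\<Sum>b\<in>UNIV. ennreal (indicator A (if b then fst z else snd z) * pmf (bernoulli_pmf (1/2)) b))"
    by (intro sum.cong refl, subst ennreal_mult)
       (auto simp: ennreal_indicator simp del: pmf_bernoulli_half pmf_bernoulli_True pmf_bernoulli_False)
  also have "\<dots> = ennreal (\<Sum>b\<in>UNIV. indicator A (if b then fst z else snd z) * pmf (bernoulli_pmf (1/2)) b)"
    by (rule sum_ennreal) auto
  also have "\<dots> = ennreal (1/2 * indicator A (fst z) + 1/2 * indicator A (snd z))"
    by (rule arg_cong[where f=ennreal]) (simp add: UNIV_bool)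
  finally show ?thesis .
qed

lemma Kd_meas_rule: assumes N: "sets N = sets (M \<Otimes>\<^sub>M M)"
  shows "Kd \<in> N \<rightarrow>\<^sub>M prob_algebra M"
proof -
  have spN: "space N = \<Omega> \<times> \<Omega>" using sets_eq_imp_space_eq[OF N] space_M by (simp add: space_pair_measure)
  show ?thesis
  proof (rule measurable_prob_algebraI)
    show "\<And>x. x \<in> space N \<Longrightarrow> prob_space (Kd x)" using Kd_prob spN by auto
    show "Kd \<in> N \<rightarrow>\<^sub>M subprob_algebra M"
    proof (rule measurable_subprob_algebra)
      show "\<And>a. a \<in> space N \<Longrightarrow> subprob_space (Kd a)"
        using Kd_prob spN by (auto intro: prob_space_imp_subprob_space)
      show "\<And>a. a \<in> space N \<Longrightarrow> sets (Kd a) = sets M" by (rule Kd_sets)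
      fix A assume A: "A \<in> sets M"
      have "(\<lambda>z. ennreal (1/2 * indicator A (fst z) + 1/2 * indicator A (snd z))) \<in> borel_measurable (M \<Otimes>\<^sub>M M)"
        using A by measurable
      then have m: "(\<lambda>z. ennreal (1/2 * indicator A (fst z) + 1/2 * indicator A (snd z))) \<in> borel_measurable N"
        by (simp add: measurable_cong_sets[OF N refl])
      show "(\<lambda>a. emeasure (Kd a) A) \<in> borel_measurable N"
        by (rule measurable_cong[THEN iffD2, OF _ m]) (use Kd_em A spN in auto)
    qed
  qed
qed

end

context p3 begin

lemma Kd_struct: assumes z: "fst z \<in> {s \<in> \<Omega>. s < sm}" "snd z \<in> {s \<in> \<Omega>. sm \<le> s}"
  shows "measure (Kd z) {snd z} = 1/2" "measure (Kd z) {s \<in> \<Omega>. s < sm} = 1/2"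
proof -
  have zz: "z \<in> \<Omega> \<times> \<Omega>" using z by (cases z) auto
  have ne: "fst z \<noteq> snd z" using z by auto
  have "emeasure (Kd z) {snd z} = ennreal (1/2)"
    using Kd_em[OF zz single_sets, of "snd z"] z ne by (auto simp: indicator_def)
  then have "measure (Kd z) {snd z} = enn2real (ennreal (1/2))" by (simp only: measure_def)
  moreover have "enn2real (ennreal (1/2)) = 1/2" by (rule enn2real_ennreal) simp
  ultimately show "measure (Kd z) {snd z} = 1/2" by linarith
  have "emeasure (Kd z) {s \<in> \<Omega>. s < sm} = ennreal (1/2)"
    using Kd_em[OF zz up_sets'(2), of sm] z by (auto simp: indicator_def)
  then have "measure (Kd z) {s \<in> \<Omega>. s < sm} = enn2real (ennreal (1/2))" by (simp only: measure_def)
  moreover have "enn2real (ennreal (1/2)) = 1/2" by (rule enn2real_ennreal) simp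
  ultimately show "measure (Kd z) {s \<in> \<Omega>. s < sm} = 1/2" by linarith
qed

lemma exists_opt: "\<exists>H0. districting_plan sl su F H0 \<and> seat_share G v H0 = Psi F"
proof -
  define Lo where "Lo = {s \<in> \<Omega>. s < sm}"
  define Hi where "Hi = {s \<in> \<Omega>. sm \<le> s}"
  have LoF: "Lo \<in> sets F" "Hi \<in> sets F" unfolding Lo_def Hi_def sets_F by simp_all
  interpret F: prob_space F by (rule F_prob)
  have mLo: "measure F Lo = 1/2" "measure F Hi = 1/2" using F_low F_high by (simp_all add: Lo_def Hi_def)
  have eLo: "emeasure F Lo = ennreal (1/2)" "emeasure F Hi = ennreal (1/2)"
    using mLo by (simp_all only: F.emeasure_eq_measure)
  define L where "L = uniform_measure F Lo"
  define U where "U = uniform_measure F Hi"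
  have pL: "prob_space L" "prob_space U" unfolding L_def U_def using eLo
    by (auto intro!: prob_space_uniform_measure)
  interpret L: prob_space L by (rule pL(1))
  interpret U: prob_space U by (rule pL(2))
  interpret LU: pair_prob_space L U by unfold_locales
  have sL: "sets L = sets M" "sets U = sets M" by (simp_all add: L_def U_def sets_F)
  define LU where "LU = L \<Otimes>\<^sub>M U"
  have sLU: "sets LU = sets (M \<Otimes>\<^sub>M M)" unfolding LU_def using sL by (intro sets_pair_measure_cong) auto
  have spLU: "space LU = \<Omega> \<times> \<Omega>" using sets_eq_imp_space_eq[OF sLU] space_M by (simp add: space_pair_measure)
  have pLU: "prob_space LU" unfolding LU_def by (rule prob_space_pair[OF pL])
  have Kdm: "Kd \<in> LU \<rightarrow>\<^sub>M prob_algebra M" by (rule Kd_meas_rule[OF sLU])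
  define H0 where "H0 = distr LU (prob_algebra M) Kd"
  have sH0: "sets H0 = sets (prob_algebra M)" by (simp add: H0_def)
  have pH0: "prob_space H0" unfolding H0_def by (rule prob_space.prob_space_distr[OF pLU Kdm])
  have mL: "measure L S = 2 * measure F (Lo \<inter> S)" if S: "S \<in> sets M" for S
  proof -
    have "emeasure L S = emeasure F (Lo \<inter> S) / ennreal (1/2)"
      unfolding L_def using LoF S eLo by (simp add: sets_F)
    also have "\<dots> = ennreal (2 * measure F (Lo \<inter> S))"
      by (subst F.emeasure_eq_measure, subst divide_ennreal) auto
    finally show ?thesis by (simp add: L.emeasure_eq_measure)
  qed
  have mU: "measure U S = 2 * measure F (Hi \<inter> S)" if S: "S \<in> sets M" for S
  proof -
    have "emeasure U S = emeasure F (Hi \<inter> S) / ennreal (1/2)"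
      unfolding U_def using LoF S eLo by (simp add: sets_F)
    also have "\<dots> = ennreal (2 * measure F (Hi \<inter> S))"
      by (subst F.emeasure_eq_measure, subst divide_ennreal) auto
    finally show ?thesis by (simp add: U.emeasure_eq_measure)
  qed
  have plan: "districting_plan sl su F H0"
    unfolding districting_plan_def
  proof (intro conjI ballI sH0 pH0)
    fix S assume S: "S \<in> sets (type_space sl su)"
    have SO: "S \<subseteq> \<Omega>" using S sets_M_iff by auto
    have "(\<integral>P. measure P S \<partial>H0) = (\<integral>z. measure (Kd z) S \<partial>LU)"
      unfolding H0_def using S by (subst integral_distr[OF Kdm]) auto
    also have "\<dots> = (\<integral>z. 1/2 * indicator (S \<times> \<Omega>) z + 1/2 * indicator (\<Omega> \<times> S) z \<partial>LU)"
    proof (rule Bochner_Integration.integral_cong[OF refl])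
      fix z assume "z \<in> space LU"
      then have zz: "z \<in> \<Omega> \<times> \<Omega>" using spLU by simp
      show "measure (Kd z) S = 1/2 * indicator (S \<times> \<Omega>) z + 1/2 * indicator (\<Omega> \<times> S) z"
      proof -
        have c: "measure (Kd z) S = 1/2 * indicator S (fst z) + 1/2 * indicator S (snd z)"
          unfolding measure_def Kd_em[OF zz S] by (rule enn2real_ennreal) simp
        moreover have "indicator (S \<times> \<Omega>) z = (indicator S (fst z) :: real)"
          "indicator (\<Omega> \<times> S) z = (indicator S (snd z) :: real)"
          using zz by (auto simp: indicator_def mem_Times_iff)
        ultimately show ?thesis by simp
      qed
    qed
    also have "\<dots> = 1/2 * measure LU (S \<times> \<Omega>) + 1/2 * measure LU (\<Omega> \<times> S)"
    proof -
      have OM: "\<Omega> \<in> sets M" using sets.top[of M] space_M by simp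
      have A: "S \<times> \<Omega> \<in> sets LU" "\<Omega> \<times> S \<in> sets LU"
        unfolding sLU by (rule pair_measureI[OF S OM], rule pair_measureI[OF OM S])
      have R: "Restr (S \<times> \<Omega>) \<Omega> = S \<times> \<Omega>" "Restr (\<Omega> \<times> S) \<Omega> = \<Omega> \<times> S" using SO by auto
      show ?thesis using A spLU SO prob_space.emeasure_space_1[OF pLU] R
        by (subst Bochner_Integration.integral_add) (auto intro!: integrable_mult_right integrable_real_indicator simp: finite_measure.emeasure_eq_measure[OF prob_space.finite_measure[OF pLU]] Int_absorb2)
    qed
    also have "\<dots> = measure F (Lo \<inter> S) + measure F (Hi \<inter> S)"
    proof -
      have OM: "\<Omega> \<in> sets M" using sets.top[of M] space_M by simp
      have "measure LU (S \<times> \<Omega>) = measure L S * measure U \<Omega>"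
        unfolding LU_def measure_def using S sL OM by (simp add: U.emeasure_pair_measure_Times enn2real_mult)
      moreover have "measure LU (\<Omega> \<times> S) = measure L \<Omega> * measure U S"
        unfolding LU_def measure_def using S sL OM by (simp add: U.emeasure_pair_measure_Times enn2real_mult)
      moreover have "measure U \<Omega> = 1" "measure L \<Omega> = 1"
        using U.prob_space L.prob_space sets_eq_imp_space_eq[OF sL(1)] sets_eq_imp_space_eq[OF sL(2)] space_M by auto
      ultimately show ?thesis using mL[OF S] mU[OF S] by simp
    qed
    also have "\<dots> = measure F S"
    proof -
      have "S = (Lo \<inter> S) \<union> (Hi \<inter> S)"
      proof (intro equalityI subsetI)
        fix x assume x: "x \<in> S"
        then have "x \<in> \<Omega>" using SO by blast
        then have "x \<in> Lo \<or> x \<in> Hi" unfolding Lo_def Hi_def by (cases "x < sm") auto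
        then show "x \<in> (Lo \<inter> S) \<union> (Hi \<inter> S)" using x by blast
      qed blast
      moreover have "measure F ((Lo \<inter> S) \<union> (Hi \<inter> S)) = measure F (Lo \<inter> S) + measure F (Hi \<inter> S)"
      proof (rule F.finite_measure_Union)
        show "Lo \<inter> S \<in> sets F" using LoF(1) S unfolding sets_F by (rule sets.Int)
        show "Hi \<inter> S \<in> sets F" using LoF(2) S unfolding sets_F by (rule sets.Int)
        show "(Lo \<inter> S) \<inter> (Hi \<inter> S) = {}" unfolding Lo_def Hi_def by auto
      qed
      ultimately show ?thesis by metis
    qed
    finally show "(\<integral>P. measure P S \<partial>H0) = measure F S" .
  qed
  have AEz: "AE z in LU. fst z \<in> Lo \<and> snd z \<in> Hi"
  proof (rule AE_I')
    have OM: "\<Omega> \<in> sets M" using sets.top[of M] space_M by simp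
    have LH: "Lo \<inter> Hi = {}" "Hi \<inter> Lo = {}" by (auto simp: Lo_def Hi_def)
    have "emeasure L Hi = 0" unfolding L_def emeasure_uniform_measure[OF LoF] LH by simp
    then have "Hi \<in> null_sets L" using LoF sL sets_F by (intro null_setsI) auto
    then have n1: "Hi \<times> \<Omega> \<in> null_sets LU"
      unfolding LU_def by (rule U.times_in_null_sets1) (use OM sL in simp)
    have "emeasure U Lo = 0" unfolding U_def emeasure_uniform_measure[OF LoF(2) LoF(1)] LH by simp
    then have "Lo \<in> null_sets U" using LoF sL sets_F by (intro null_setsI) auto
    then have n2: "\<Omega> \<times> Lo \<in> null_sets LU"
      unfolding LU_def by (rule U.times_in_null_sets2[rotated]) (use OM sL in simp)
    show "Hi \<times> \<Omega> \<union> \<Omega> \<times> Lo \<in> null_sets LU" by (rule null_sets.Un[OF n1 n2])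
    show "{z \<in> space LU. \<not> (fst z \<in> Lo \<and> snd z \<in> Hi)} \<subseteq> Hi \<times> \<Omega> \<union> \<Omega> \<times> Lo"
    proof
      fix z assume "z \<in> {z \<in> space LU. \<not> (fst z \<in> Lo \<and> snd z \<in> Hi)}"
      then have "fst z \<in> \<Omega>" "snd z \<in> \<Omega>" "\<not> (fst z \<in> Lo \<and> snd z \<in> Hi)" using spLU by (auto simp: mem_Times_iff)
      moreover obtain a b where z: "z = (a, b)" by (cases z)
      ultimately have ab: "a \<in> \<Omega>" "b \<in> \<Omega>" "\<not> (a \<in> Lo \<and> b \<in> Hi)" by simp_all
      show "z \<in> Hi \<times> \<Omega> \<union> \<Omega> \<times> Lo"
      proof (cases "a \<in> Lo")
        case True
        then have "b \<notin> Hi" using ab by blast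
        then have "b \<in> Lo" using ab(2) unfolding Lo_def Hi_def by auto
        then show ?thesis using z ab by blast
      next
        case False
        then have "a \<in> Hi" using ab(1) unfolding Lo_def Hi_def by auto
        then show ?thesis using z ab by blast
      qed
    qed
  qed
  have "seat_share G v H0 = (\<integral>\<^sup>+P. ennreal (Gc (qP P)) \<partial>H0)" by (rule seat_eq[OF plan])
  also have "\<dots> = (\<integral>\<^sup>+z. ennreal (Gc (qP (Kd z))) \<partial>LU)"
    unfolding H0_def by (rule nn_integral_distr[OF Kdm]) (use W_meas in simp)
  also have "\<dots> = (\<integral>\<^sup>+z. Psi (Kd z) \<partial>LU)"
  proof (rule nn_integral_cong_AE)
    show "AE z in LU. ennreal (Gc (qP (Kd z))) = Psi (Kd z)"
      using AEz
    proof eventually_elim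
      case (elim z)
      have zz: "z \<in> \<Omega> \<times> \<Omega>" using elim by (auto simp: Lo_def Hi_def mem_Times_iff)
      have KP: "Kd z \<in> space (prob_algebra M)"
        using Kd_prob[OF zz] Kd_sets by (simp add: space_prob_algebra)
      have st: "measure (Kd z) {snd z} = 1/2" "measure (Kd z) {s \<in> \<Omega>. s < sm} = 1/2"
        using Kd_struct[of z] elim by (auto simp: Lo_def Hi_def)
      have "sm \<le> snd z" using elim by (simp add: Hi_def)
      from struct_equality[OF KP this st]
      show ?case using Psi_eq[OF KP] by simp
    qed
  qed
  also have "\<dots> = (\<integral>\<^sup>+P. Psi P \<partial>H0)"
    unfolding H0_def by (rule nn_integral_distr[OF Kdm, symmetric]) (use Psi_meas in simp)
  also have "\<dots> = Psi F" by (rule plan_join[OF plan])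
  finally show ?thesis using plan by blast
qed

end

context p3 begin

lemma opt_struct: assumes H: "districting_plan sl su F H" and ge: "Psi F \<le> seat_share G v H"
  shows "AE P in H. \<exists>sP \<ge> sm. measure P {sP} = 1/2 \<and> measure P {s \<in> \<Omega>. s < sm} = 1/2"
proof -
  note HF = plan_facts[OF H]
  interpret H: prob_space H using HF(2) .
  define w where "w = (\<lambda>P. ennreal (Gc (qP P)))"
  have wm: "w \<in> borel_measurable H" unfolding w_def using W_meas by (simp add: measurable_cong_sets[OF HF(1) refl])
  have fm: "Psi \<in> borel_measurable H" using Psi_meas by (simp add: measurable_cong_sets[OF HF(1) refl])
  have le: "w P \<le> Psi P" if "P \<in> space H" for P
    using that HF(3) bound Psi_eq unfolding w_def by (auto intro: ennreal_leI)
  have fin: "integral\<^sup>N H w \<noteq> \<infinity>"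
  proof -
    have "integral\<^sup>N H w \<le> integral\<^sup>N H Psi" using le by (intro nn_integral_mono) auto
    also have "\<dots> = Psi F" by (rule plan_join[OF H])
    also have "\<dots> = ennreal (\<integral>s. psi s \<partial>F)" by (rule Psi_eq[OF F_in])
    finally have X: "integral\<^sup>N H w \<le> ennreal (\<integral>s. psi s \<partial>F)" .
    show ?thesis
    proof
      assume "integral\<^sup>N H w = \<infinity>"
      then show False using X by (simp add: top_unique)
    qed
  qed
  have sw: "seat_share G v H = integral\<^sup>N H w" unfolding w_def by (rule seat_eq[OF H])
  have "(\<integral>\<^sup>+P. Psi P - w P \<partial>H) = integral\<^sup>N H Psi - integral\<^sup>N H w"
    by (rule nn_integral_diff[OF fm wm fin]) (use le in \<open>auto intro!: AE_I2\<close>)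
  also have "\<dots> = 0" using ge sw plan_join[OF H] Psi_eq[OF F_in] by (simp add: diff_eq_0_iff_ennreal)
  finally have "AE P in H. Psi P - w P = 0"
    using fm wm by (subst (asm) nn_integral_0_iff_AE) auto
  moreover have "AE P in H. measure P {sm} = 0"
  proof -
    have "(\<integral>P. measure P {sm} \<partial>H) = 0"
      using HF(4)[OF single_sets[OF sm_in]] F_single by simp
    then show ?thesis
      using plan_measure_int[OF H single_sets[OF sm_in]]
      by (subst (asm) integral_nonneg_eq_0_iff_AE) auto
  qed
  moreover have "AE P in H. P \<in> space H" by (rule AE_space)
  ultimately show ?thesis
  proof (eventually_elim)
    case (elim P)
    have PA': "P \<in> space (prob_algebra M)" using elim HF(3) by simp
    have "Psi P \<le> w P" using elim(1) by (simp add: ennreal_minus_eq_0)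
    then have "Psi P = w P" using le[OF elim(3)] by simp
    then have "ennreal (\<integral>s. psi s \<partial>P) = ennreal (Gc (qP P))" using Psi_eq[OF PA'] by (simp add: w_def)
    then have "(\<integral>s. psi s \<partial>P) = Gc (qP P)"
      using bound[OF PA'] Gc_nonneg[of "qP P"] by (subst (asm) ennreal_inj) auto
    from equality_struct[OF PA' elim(2) this[symmetric]]
    show ?case by blast
  qed
qed

lemma struct_seat: assumes H: "districting_plan sl su F H"
  and st: "AE P in H. \<exists>sP \<ge> sm. measure P {sP} = 1/2 \<and> measure P {s \<in> \<Omega>. s < sm} = 1/2"
  shows "seat_share G v H = Psi F"
proof -
  note HF = plan_facts[OF H]
  have "seat_share G v H = (\<integral>\<^sup>+P. ennreal (Gc (qP P)) \<partial>H)" by (rule seat_eq[OF H])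
  also have "\<dots> = (\<integral>\<^sup>+P. Psi P \<partial>H)"
  proof (rule nn_integral_cong_AE)
    show "AE P in H. ennreal (Gc (qP P)) = Psi P"
      using st AE_space
    proof eventually_elim
      case (elim P)
      have PA': "P \<in> space (prob_algebra M)" using elim HF(3) by simp
      from elim(1) obtain sP where "sm \<le> sP" "measure P {sP} = 1/2" "measure P {s \<in> \<Omega>. s < sm} = 1/2"
        by blast
      from struct_equality[OF PA' this] show ?case using Psi_eq[OF PA'] by simp
    qed
  qed
  also have "\<dots> = Psi F" by (rule plan_join[OF H])
  finally show ?thesis .
qed

theorem main:
  "(optimal_plan sl su F G v H \<longleftrightarrow>
      districting_plan sl su F H \<and>
      (AE P in H. \<exists>sP \<ge> sm. measure P {sP} = 1/2 \<and>
                             measure P {s \<in> {sl..su}. s < sm} = 1/2))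
   \<and> (optimal_plan sl su F G v H \<longrightarrow>
      (AE P in H. \<exists>sP \<ge> sm. measure P {sP} = 1/2 \<and>
                             measure P {s \<in> {sl..su}. s < sm} = 1/2 \<and>
                             (\<forall>r. wins v P r \<longleftrightarrow> r \<le> sP)))"
proof -
  have fwd: "districting_plan sl su F H \<and>
      (AE P in H. \<exists>sP \<ge> sm. measure P {sP} = 1/2 \<and> measure P {s \<in> {sl..su}. s < sm} = 1/2)"
    if opt: "optimal_plan sl su F G v H"
  proof -
    have H: "districting_plan sl su F H" using opt by (simp add: optimal_plan_def)
    obtain H0 where H0: "districting_plan sl su F H0" "seat_share G v H0 = Psi F" using exists_opt by blast
    have "Psi F \<le> seat_share G v H" using opt H0 unfolding optimal_plan_def by metis
    from opt_struct[OF H this] show ?thesis using H by simp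
  qed
  have bwd: "optimal_plan sl su F G v H"
    if H: "districting_plan sl su F H"
      and st: "AE P in H. \<exists>sP \<ge> sm. measure P {sP} = 1/2 \<and> measure P {s \<in> {sl..su}. s < sm} = 1/2"
    unfolding optimal_plan_def using H seat_le struct_seat[OF H st] by simp
  have part2: "AE P in H. \<exists>sP \<ge> sm. measure P {sP} = 1/2 \<and>
                             measure P {s \<in> {sl..su}. s < sm} = 1/2 \<and>
                             (\<forall>r. wins v P r \<longleftrightarrow> r \<le> sP)"
    if opt: "optimal_plan sl su F G v H"
  proof -
    have H: "districting_plan sl su F H" and st: "AE P in H. \<exists>sP \<ge> sm. measure P {sP} = 1/2 \<and> measure P {s \<in> {sl..su}. s < sm} = 1/2"
      using fwd[OF opt] by auto
    note HF = plan_facts[OF H]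
    show ?thesis using st AE_space
    proof eventually_elim
      case (elim P)
      have PA': "P \<in> space (prob_algebra M)" using elim HF(3) by simp
      from elim(1) obtain sP where sP: "sm \<le> sP" "measure P {sP} = 1/2" "measure P {s \<in> \<Omega>. s < sm} = 1/2"
        by blast
      from struct_equality[OF PA' this] sP show ?case by blast
    qed
  qed
  show ?thesis using fwd bwd part2 by blast
qed

end

theorem proposition3:
  fixes sl su sm :: real
    and f g :: "real \<Rightarrow> real"
    and F G :: "real measure"
    and v :: "real \<Rightarrow> real \<Rightarrow> real"
    and H :: "real measure measure"
  assumes F_def: "F = density (restrict_space lborel {sl..su}) (\<lambda>s. ennreal (f s))"
    and f_meas: "f \<in> borel_measurable borel"
    and f_pos: "\<forall>s \<in> {sl..su}. f s > 0"
    and F_prob: "prob_space F"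
    and G_def: "G = density lborel (\<lambda>r. ennreal (g r))"
    and g_meas: "g \<in> borel_measurable borel"
    and g_pos: "\<forall>r. g r > 0"
    and G_prob: "prob_space G"
    and v_def: "\<forall>s r. v s r = (if r \<le> s then 1 else 0)"
    and median: "sm \<in> {sl..su}" "measure F {s \<in> {sl..su}. s \<le> sm} = 1/2"
  shows "(optimal_plan sl su F G v H \<longleftrightarrow>
            districting_plan sl su F H \<and>
            (AE P in H. \<exists>sP \<ge> sm. measure P {sP} = 1/2 \<and>
                                   measure P {s \<in> {sl..su}. s < sm} = 1/2))
       \<and> (optimal_plan sl su F G v H \<longrightarrow>
            (AE P in H. \<exists>sP \<ge> sm. measure P {sP} = 1/2 \<and>
                                   measure P {s \<in> {sl..su}. s < sm} = 1/2 \<and>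
                                   (\<forall>r. wins v P r \<longleftrightarrow> r \<le> sP)))"
proof -
  interpret p3 sl su sm f g F G v
    by (rule p3.intro) (rule assms)+
  show ?thesis by (rule main)
qed

end
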